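(* Let $n\geq 1$, $m\geq 2$, and let $M$ be a perfect matching of $T(2n+1,2m)$. Then there is a perfect matching $M'$ of $T(2n+1,2m)$ obtained from $M$ by a finite sequence of flips such that $M'\cap E_i=\emptyset$ for some $1\leq i\leq 2m$.
   Context: $T(2n+1,2m)$ is the graph with vertices $(u_i,v_j)$, $i\in\mathbb{Z}_{2m}$, $j\in\mathbb{Z}_{2n+1}$, where $(u_i,v_j)$ is adjacent to $(u_{i+1},v_j)$ and $(u_i,v_{j+1})$, embedded in the torus with faces the $4$-cycles $(u_i,v_j)(u_{i+1},v_j)(u_{i+1},v_{j+1})(u_i,v_{j+1})$. For $1\le i\le 2m$, $E_i=\{(u_i,v_j)(u_{i+1},v_j):1\le j\le 2n+1\}$ (index $i+1$ mod $2m$). A flip of a perfect matching $M$ replaces $M$ by $M\oplus E(C)$ where $C$ is a facial $4$-cycle whose edges alternate between $M$ and not in $M$. *)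

theory Defs
  imports Main
begin

text \<open>The toroidal grid T(2n+1,2m). Vertex (u_i,v_j) is the pair (i,j) with
  i < 2m (i in Z_2m) and j < 2n+1 (j in Z_(2n+1)). Edges are two-element vertex sets.\<close>

definition tvert :: "nat \<Rightarrow> nat \<Rightarrow> (nat \<times> nat) set" where
  "tvert n m = {0..<2*m} \<times> {0..<2*n+1}"

definition hedge :: "nat \<Rightarrow> nat \<Rightarrow> nat \<Rightarrow> nat \<Rightarrow> (nat \<times> nat) set" where
  "hedge n m i j = {(i mod (2*m), j mod (2*n+1)), ((i+1) mod (2*m), j mod (2*n+1))}"

definition vedge :: "nat \<Rightarrow> nat \<Rightarrow> nat \<Rightarrow> nat \<Rightarrow> (nat \<times> nat) set" where
  "vedge n m i j = {(i mod (2*m), j mod (2*n+1)), (i mod (2*m), (j+1) mod (2*n+1))}"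

definition tedges :: "nat \<Rightarrow> nat \<Rightarrow> (nat \<times> nat) set set" where
  "tedges n m = {hedge n m i j | i j. i < 2*m \<and> j < 2*n+1}
              \<union> {vedge n m i j | i j. i < 2*m \<and> j < 2*n+1}"

definition perfect_matching :: "nat \<Rightarrow> nat \<Rightarrow> (nat \<times> nat) set set \<Rightarrow> bool" where
  "perfect_matching n m M \<longleftrightarrow> M \<subseteq> tedges n m \<and>
     (\<forall>v \<in> tvert n m. \<exists>!e. e \<in> M \<and> v \<in> e)"

definition face_edges :: "nat \<Rightarrow> nat \<Rightarrow> nat \<Rightarrow> nat \<Rightarrow> (nat \<times> nat) set set" where
  "face_edges n m i j = {hedge n m i j, vedge n m (i+1) j, hedge n m i (j+1), vedge n m i j}"

definition alternating_face :: "nat \<Rightarrow> nat \<Rightarrow> (nat \<times> nat) set set \<Rightarrow> nat \<Rightarrow> nat \<Rightarrow> bool" where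
  "alternating_face n m M i j \<longleftrightarrow>
     (hedge n m i j \<in> M \<and> vedge n m (i+1) j \<notin> M \<and> hedge n m i (j+1) \<in> M \<and> vedge n m i j \<notin> M)
   \<or> (hedge n m i j \<notin> M \<and> vedge n m (i+1) j \<in> M \<and> hedge n m i (j+1) \<notin> M \<and> vedge n m i j \<in> M)"

definition flip :: "nat \<Rightarrow> nat \<Rightarrow> (nat \<times> nat) set set \<Rightarrow> (nat \<times> nat) set set \<Rightarrow> bool" where
  "flip n m M M' \<longleftrightarrow> (\<exists>i < 2*m. \<exists>j < 2*n+1. alternating_face n m M i j \<and>
      M' = (M - face_edges n m i j) \<union> (face_edges n m i j - M))"

definition Eset :: "nat \<Rightarrow> nat \<Rightarrow> nat \<Rightarrow> (nat \<times> nat) set set" where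
  "Eset n m i = {hedge n m i j | j. 1 \<le> j \<and> j \<le> 2*n+1}"

end

theory Submission
  imports Defs
begin

locale torus =
  fixes n m :: nat
  assumes n1: "1 \<le> n" and m2: "2 \<le> m"
begin

definition P :: int where "P = int (2*m)"
definition L :: int where "L = int (2*n+1)"

lemma P4: "4 \<le> P" using m2 by (simp add: P_def)
lemma L3: "3 \<le> L" using n1 by (simp add: L_def)

lemma P_ndvd: "0 < \<bar>x\<bar> \<Longrightarrow> \<bar>x\<bar> < P \<Longrightarrow> \<not> P dvd x"
  by (metis dvd_abs_iff not_le zdvd_imp_le)
lemma L_ndvd: "0 < \<bar>x\<bar> \<Longrightarrow> \<bar>x\<bar> < L \<Longrightarrow> \<not> L dvd x"
  by (metis dvd_abs_iff not_le zdvd_imp_le)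

lemma ndvd_simps[simp]: "\<not> P dvd 1" "\<not> P dvd 2" "\<not> P dvd -1" "\<not> P dvd -2"
   "\<not> L dvd 1" "\<not> L dvd 2" "\<not> L dvd -1" "\<not> L dvd -2"
  using P_ndvd[of 1] P_ndvd[of 2] P_ndvd[of "-1"] P_ndvd[of "-2"] P4
        L_ndvd[of 1] L_ndvd[of 2] L_ndvd[of "-1"] L_ndvd[of "-2"] L3 by auto

lemma abs_ne1[simp]: "\<bar>P\<bar> \<noteq> 1" "\<bar>L\<bar> \<noteq> 1" using P4 L3 by auto

definition pos :: "int \<Rightarrow> int \<Rightarrow> nat \<times> nat" where
  "pos a b = (nat (a mod P), nat (b mod L))"

lemma pos_eq: "pos a b = pos c d \<longleftrightarrow> P dvd (a - c) \<and> L dvd (b - d)"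
proof -
  have "P > 0" "L > 0" using P4 L3 by auto
  then show ?thesis unfolding pos_def
    by (simp add: mod_eq_dvd_iff[symmetric] eq_nat_nat_iff)
qed

definition hh :: "int \<Rightarrow> int \<Rightarrow> (nat \<times> nat) set" where
  "hh a b = {pos a b, pos (a+1) b}"
definition vv :: "int \<Rightarrow> int \<Rightarrow> (nat \<times> nat) set" where
  "vv a b = {pos a b, pos a (b+1)}"

lemma hh_eq: "hh a b = hh c d \<longleftrightarrow> P dvd (a - c) \<and> L dvd (b - d)"
proof
  assume h: "hh a b = hh c d"
  have A: "pos a b \<in> hh c d" "pos (a+1) b \<in> hh c d" using h unfolding hh_def by auto
  show "P dvd (a - c) \<and> L dvd (b - d)"
  proof (cases "pos a b = pos c d")
    case True then show ?thesis by (simp add: pos_eq)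
  next
    case False
    then have 1: "P dvd (a - (c+1))" "L dvd (b - d)" using A(1) unfolding hh_def by (auto simp: pos_eq)
    from A(2) have "pos (a+1) b = pos c d \<or> pos (a+1) b = pos (c+1) d" unfolding hh_def by auto
    then show ?thesis
    proof
      assume "pos (a+1) b = pos c d"
      then have "P dvd (a + 1 - c)" by (simp add: pos_eq)
      with 1 have "P dvd ((a + 1 - c) - (a - (c+1)))" using dvd_diff by blast
      then show ?thesis by simp
    next
      assume "pos (a+1) b = pos (c+1) d"
      then have "P dvd (a + 1 - (c+1))" by (simp add: pos_eq)
      with 1 have "P dvd ((a + 1 - (c+1)) - (a - (c+1)))" using dvd_diff by blast
      then show ?thesis by simp
    qed
  qed
next
  assume "P dvd (a - c) \<and> L dvd (b - d)"
  then have "pos a b = pos c d" "pos (a+1) b = pos (c+1) d" by (auto simp: pos_eq)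
  then show "hh a b = hh c d" by (simp add: hh_def)
qed

lemma vv_eq: "vv a b = vv c d \<longleftrightarrow> P dvd (a - c) \<and> L dvd (b - d)"
proof
  assume h: "vv a b = vv c d"
  have A: "pos a b \<in> vv c d" "pos a (b+1) \<in> vv c d" using h unfolding vv_def by auto
  show "P dvd (a - c) \<and> L dvd (b - d)"
  proof (cases "pos a b = pos c d")
    case True then show ?thesis by (simp add: pos_eq)
  next
    case False
    then have 1: "L dvd (b - (d+1))" "P dvd (a - c)" using A(1) unfolding vv_def by (auto simp: pos_eq)
    from A(2) have "pos a (b+1) = pos c d \<or> pos a (b+1) = pos c (d+1)" unfolding vv_def by auto
    then show ?thesis
    proof
      assume "pos a (b+1) = pos c d"
      then have "L dvd (b + 1 - d)" by (simp add: pos_eq)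
      with 1 have "L dvd ((b + 1 - d) - (b - (d+1)))" using dvd_diff by blast
      then show ?thesis by simp
    next
      assume "pos a (b+1) = pos c (d+1)"
      then have "L dvd (b + 1 - (d+1))" by (simp add: pos_eq)
      with 1 have "L dvd ((b + 1 - (d+1)) - (b - (d+1)))" using dvd_diff by blast
      then show ?thesis by simp
    qed
  qed
next
  assume "P dvd (a - c) \<and> L dvd (b - d)"
  then have "pos a b = pos c d" "pos a (b+1) = pos c (d+1)" by (auto simp: pos_eq)
  then show "vv a b = vv c d" by (simp add: vv_def)
qed

lemma hh_ne_vv[simp]: "hh a b \<noteq> vv c d" "vv c d \<noteq> hh a b"
proof -
  show "hh a b \<noteq> vv c d"
  proof
    assume h: "hh a b = vv c d"
    have "pos a b \<in> vv c d" "pos (a+1) b \<in> vv c d" using h unfolding hh_def by auto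
    then have "P dvd (a - c)" "P dvd (a + 1 - c)" unfolding vv_def by (auto simp: pos_eq)
    then have "P dvd ((a+1-c) - (a - c))" using dvd_diff by blast
    then show False by simp
  qed
  then show "vv c d \<noteq> hh a b" by metis
qed

lemma pos_nat: "pos (int i) (int j) = (i mod (2*m), j mod (2*n+1))"
proof -
  have "int i mod int (2*m) = int (i mod (2*m))" "int j mod int (2*n+1) = int (j mod (2*n+1))"
    by (simp_all only: of_nat_mod)
  then show ?thesis unfolding pos_def P_def L_def by (simp only: nat_int)
qed

lemma hedge_hh: "hedge n m i j = hh (int i) (int j)"
proof -
  have "pos (int i + 1) (int j) = pos (int (i+1)) (int j)" by (simp add: add.commute)
  then show ?thesis unfolding hedge_def hh_def pos_nat by simp
qed
lemma vedge_vv: "vedge n m i j = vv (int i) (int j)"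
proof -
  have "pos (int i) (int j + 1) = pos (int i) (int (j+1))" by (simp add: add.commute)
  then show ?thesis unfolding vedge_def vv_def pos_nat by simp
qed

lemma dvd_mod_diff: "(k::int) dvd (a - a mod k)"
  by (simp add: minus_mod_eq_mult_div)

lemma dvd_mod_diff2: "(k::int) dvd (a mod k - a)"
  using dvd_mod_diff[of k a] by (simp add: dvd_diff_commute)

lemma hh_hedge: "hh a b = hedge n m (nat (a mod P)) (nat (b mod L))"
proof -
  have "P > 0" "L > 0" using P4 L3 by auto
  then show ?thesis unfolding hedge_hh using dvd_mod_diff[of P a] dvd_mod_diff[of L b]
    by (simp add: hh_eq)
qed
lemma vv_vedge: "vv a b = vedge n m (nat (a mod P)) (nat (b mod L))"
proof -
  have "P > 0" "L > 0" using P4 L3 by auto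
  then show ?thesis unfolding vedge_vv using dvd_mod_diff[of P a] dvd_mod_diff[of L b]
    by (simp add: vv_eq)
qed

lemma idx_bound: "nat (a mod P) < 2*m" "nat (b mod L) < 2*n+1"
proof -
  have "P > 0" "L > 0" using P4 L3 by auto
  then show "nat (a mod P) < 2*m" "nat (b mod L) < 2*n+1"
    unfolding P_def L_def by (simp_all add: nat_less_iff)
qed

lemma hh_tedges: "hh a b \<in> tedges n m"
  unfolding tedges_def hh_hedge using idx_bound by blast
lemma vv_tedges: "vv a b \<in> tedges n m"
  unfolding tedges_def vv_vedge using idx_bound by blast

lemma pos_tvert: "pos a b \<in> tvert n m"
  unfolding tvert_def using idx_bound(1)[of a] idx_bound(2)[of b] unfolding pos_def by auto

abbreviation PM :: "(nat \<times> nat) set set \<Rightarrow> bool" where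
  "PM M \<equiv> perfect_matching n m M"

lemma uniq: "PM M \<Longrightarrow> e1 \<in> M \<Longrightarrow> e2 \<in> M \<Longrightarrow> pos a b \<in> e1 \<Longrightarrow> pos a b \<in> e2 \<Longrightarrow> e1 = e2"
  unfolding perfect_matching_def using pos_tvert by blast

lemma tedges_cases: "e \<in> tedges n m \<Longrightarrow> (\<exists>c d. e = hh c d) \<or> (\<exists>c d. e = vv c d)"
  unfolding tedges_def hedge_hh vedge_vv by blast

lemma pos_shift: "pos a b = pos c d \<Longrightarrow> pos (a + x) (b + y) = pos (c + x) (d + y)"
  by (simp add: pos_eq)

lemma cover: "PM M \<Longrightarrow> hh a b \<in> M \<or> hh (a-1) b \<in> M \<or> vv a b \<in> M \<or> vv a (b-1) \<in> M"
proof -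
  assume pm: "PM M"
  then obtain e where e: "e \<in> M" "pos a b \<in> e"
    unfolding perfect_matching_def using pos_tvert by blast
  then have "e \<in> tedges n m" using pm unfolding perfect_matching_def by blast
  then consider (h) c d where "e = hh c d" | (v) c d where "e = vv c d" using tedges_cases by blast
  then show ?thesis
  proof cases
    case h
    then have "pos a b = pos c d \<or> pos a b = pos (c+1) d" using e by (auto simp: hh_def)
    then show ?thesis
    proof
      assume "pos a b = pos c d"
      then have "hh c d = hh a b" by (simp add: hh_eq pos_eq dvd_diff_commute)
      then show ?thesis using e h by simp
    next
      assume "pos a b = pos (c+1) d"
      then have "hh c d = hh (a-1) b" 
        by (simp add: hh_eq pos_eq dvd_diff_commute) (smt (verit, best) dvd_minus_iff minus_diff_eq)
      then show ?thesis using e h by simp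
    qed
  next
    case v
    then have "pos a b = pos c d \<or> pos a b = pos c (d+1)" using e by (auto simp: vv_def)
    then show ?thesis
    proof
      assume "pos a b = pos c d"
      then have "vv c d = vv a b" by (simp add: vv_eq pos_eq dvd_diff_commute)
      then show ?thesis using e v by simp
    next
      assume "pos a b = pos c (d+1)"
      then have "vv c d = vv a (b-1)" 
        by (simp add: vv_eq pos_eq dvd_diff_commute) (smt (verit, best) dvd_minus_iff minus_diff_eq)
      then show ?thesis using e v by simp
    qed
  qed
qed

definition face :: "int \<Rightarrow> int \<Rightarrow> (nat \<times> nat) set set" where
  "face a b = {hh a b, vv (a+1) b, hh a (b+1), vv a b}"

definition alt :: "(nat \<times> nat) set set \<Rightarrow> int \<Rightarrow> int \<Rightarrow> bool" where
  "alt M a b \<longleftrightarrow>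
     (hh a b \<in> M \<and> vv (a+1) b \<notin> M \<and> hh a (b+1) \<in> M \<and> vv a b \<notin> M)
   \<or> (hh a b \<notin> M \<and> vv (a+1) b \<in> M \<and> hh a (b+1) \<notin> M \<and> vv a b \<in> M)"

definition fl :: "(nat \<times> nat) set set \<Rightarrow> int \<Rightarrow> int \<Rightarrow> (nat \<times> nat) set set" where
  "fl M a b = (M - face a b) \<union> (face a b - M)"

lemma fl_mem: "e \<in> fl M a b \<longleftrightarrow> (e \<in> M \<longleftrightarrow> e \<notin> face a b)"
  unfolding fl_def by blast

lemma face_nat: "face_edges n m (nat (a mod P)) (nat (b mod L)) = face a b"
proof -
  have "P > 0" "L > 0" using P4 L3 by auto
  have 1: "hedge n m (nat (a mod P)) (nat (b mod L)) = hh a b" by (simp add: hh_hedge)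
  have 2: "vedge n m (nat (a mod P)) (nat (b mod L)) = vv a b" by (simp add: vv_vedge)
  have 3: "hedge n m (nat (a mod P)) (nat (b mod L) + 1) = hh a (b+1)"
    unfolding hedge_hh using \<open>P > 0\<close> \<open>L > 0\<close> dvd_mod_diff2[of P a] dvd_mod_diff2[of L b]
    by (simp add: hh_eq)
  have 4: "vedge n m (nat (a mod P) + 1) (nat (b mod L)) = vv (a+1) b"
    unfolding vedge_vv using \<open>P > 0\<close> \<open>L > 0\<close> dvd_mod_diff2[of P a] dvd_mod_diff2[of L b]
    by (simp add: vv_eq)
  show ?thesis unfolding face_edges_def face_def 1 2 3 4 by auto
qed

lemma alt_nat: "alternating_face n m M (nat (a mod P)) (nat (b mod L)) = alt M a b"
proof -
  have "P > 0" "L > 0" using P4 L3 by auto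
  have 1: "hedge n m (nat (a mod P)) (nat (b mod L)) = hh a b" by (simp add: hh_hedge)
  have 2: "vedge n m (nat (a mod P)) (nat (b mod L)) = vv a b" by (simp add: vv_vedge)
  have 3: "hedge n m (nat (a mod P)) (nat (b mod L) + 1) = hh a (b+1)"
    unfolding hedge_hh using \<open>P > 0\<close> \<open>L > 0\<close> dvd_mod_diff2[of P a] dvd_mod_diff2[of L b]
    by (simp add: hh_eq)
  have 4: "vedge n m (nat (a mod P) + 1) (nat (b mod L)) = vv (a+1) b"
    unfolding vedge_vv using \<open>P > 0\<close> \<open>L > 0\<close> dvd_mod_diff2[of P a] dvd_mod_diff2[of L b]
    by (simp add: vv_eq)
  show ?thesis unfolding alternating_face_def alt_def 1 2 3 4 by auto
qed

lemma flip_fl: "alt M a b \<Longrightarrow> flip n m M (fl M a b)"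
  unfolding flip_def using idx_bound(1)[of a] idx_bound(2)[of b] alt_nat[of M a b] face_nat[of a b]
  by (auto simp: fl_def)

lemma swap_abs:
  assumes u: "\<forall>v\<in>V. \<exists>!e. e \<in> M \<and> v \<in> e"
    and e12: "e1 \<in> M" "e2 \<in> M" and e34: "e3 \<notin> M" "e4 \<notin> M"
    and un: "e1 \<union> e2 = e3 \<union> e4" and dis: "e3 \<inter> e4 = {}"
    and F: "F = {e1, e2, e3, e4}"
  shows "\<forall>v\<in>V. \<exists>!e. e \<in> (M - F) \<union> (F - M) \<and> v \<in> e"
proof
  fix v assume vV: "v \<in> V"
  show "\<exists>!e. e \<in> (M - F) \<union> (F - M) \<and> v \<in> e"
  proof (cases "v \<in> e3 \<union> e4")
    case True
    then obtain e0 where e0: "e0 \<in> {e3, e4}" "v \<in> e0" by blast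
    have ex: "e0 \<in> (M - F) \<union> (F - M)" using e0 e34 F by auto
    show ?thesis
    proof (rule ex1I[of _ e0])
      show "e0 \<in> M - F \<union> (F - M) \<and> v \<in> e0" using ex e0 by blast
    next
      fix e assume e: "e \<in> M - F \<union> (F - M) \<and> v \<in> e"
      show "e = e0"
      proof (cases "e \<in> M")
        case True
        have "v \<in> e1 \<union> e2" using un True \<open>v \<in> e3 \<union> e4\<close> by blast
        then have "e = e1 \<or> e = e2" using u vV e e12 True by blast
        then show ?thesis using e F True by blast
      next
        case False
        then have "e \<in> {e3, e4}" using e F e12 by blast
        then show ?thesis using e0 e dis by blast
      qed
    qed
  next
    case False
    then have nF: "\<forall>f\<in>F. v \<notin> f" using F un by blast
    obtain e0 where e0: "e0 \<in> M" "v \<in> e0" using u vV by blast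
    show ?thesis
    proof (rule ex1I[of _ e0])
      show "e0 \<in> M - F \<union> (F - M) \<and> v \<in> e0" using e0 nF by blast
    next
      fix e assume e: "e \<in> M - F \<union> (F - M) \<and> v \<in> e"
      then have "e \<in> M" using nF by blast
      then show "e = e0" using u vV e e0 by blast
    qed
  qed
qed

lemma face_tedges: "face a b \<subseteq> tedges n m"
  unfolding face_def using hh_tedges vv_tedges by blast

lemma pm_fl: assumes pm: "PM M" and al: "alt M a b" shows "PM (fl M a b)"
proof -
  define A where "A = pos a b"
  define B where "B = pos (a+1) b"
  define C where "C = pos (a+1) (b+1)"
  define D where "D = pos a (b+1)"
  have d: "A \<noteq> B" "A \<noteq> C" "A \<noteq> D" "B \<noteq> C" "B \<noteq> D" "C \<noteq> D"
    unfolding A_def B_def C_def D_def by (simp_all add: pos_eq)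
  have E: "hh a b = {A,B}" "vv (a+1) b = {B,C}" "hh a (b+1) = {D,C}" "vv a b = {A,D}"
    unfolding A_def B_def C_def D_def hh_def vv_def by auto
  have u: "\<forall>v\<in>tvert n m. \<exists>!e. e \<in> M \<and> v \<in> e" using pm unfolding perfect_matching_def by blast
  have sub: "fl M a b \<subseteq> tedges n m" using pm face_tedges unfolding fl_def perfect_matching_def by blast
  from al have "\<forall>v\<in>tvert n m. \<exists>!e. e \<in> fl M a b \<and> v \<in> e"
    unfolding alt_def
  proof
    assume h: "hh a b \<in> M \<and> vv (a+1) b \<notin> M \<and> hh a (b+1) \<in> M \<and> vv a b \<notin> M"
    show ?thesis unfolding fl_def
      apply (rule swap_abs[OF u, of "hh a b" "hh a (b+1)" "vv (a+1) b" "vv a b"])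
      using h d unfolding E face_def by auto
  next
    assume h: "hh a b \<notin> M \<and> vv (a+1) b \<in> M \<and> hh a (b+1) \<notin> M \<and> vv a b \<in> M"
    show ?thesis unfolding fl_def
      apply (rule swap_abs[OF u, of "vv (a+1) b" "vv a b" "hh a b" "hh a (b+1)"])
      using h d unfolding E face_def by auto
  qed
  then show ?thesis using sub unfolding perfect_matching_def by blast
qed


definition Vc :: "(nat \<times> nat) set set \<Rightarrow> int \<Rightarrow> int \<Rightarrow> bool" where
  "Vc M r p \<longleftrightarrow> hh (r-1) p \<in> M \<or> hh r p \<in> M"

lemma mem_simps[simp]: "pos a b \<in> hh a b" "pos (a+1) b \<in> hh a b" "pos a b \<in> hh (a-1) b"
   "pos a b \<in> vv a b" "pos a (b+1) \<in> vv a b" "pos a b \<in> vv a (b-1)"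
  unfolding hh_def vv_def by auto

lemma clash_hv: "PM M \<Longrightarrow> hh x y \<in> M \<Longrightarrow> vv z w \<in> M \<Longrightarrow> pos a b \<in> hh x y \<Longrightarrow> pos a b \<in> vv z w \<Longrightarrow> False"
  using uniq[of M "hh x y" "vv z w" a b] by simp

lemma clash_vc: "PM M \<Longrightarrow> Vc M r a \<Longrightarrow> vv z w \<in> M \<Longrightarrow> pos r a \<in> vv z w \<Longrightarrow> False"
  unfolding Vc_def using clash_hv[of M "r-1" a z w r a] clash_hv[of M r a z w r a] by auto

lemma row_vv:
  assumes pm: "PM M" and a: "Vc M r a"
    and nv: "\<forall>k. 1 \<le> k \<and> k \<le> t \<longrightarrow> \<not> Vc M r (a + int k)"
  shows "2*s+1 \<le> t \<Longrightarrow> vv r (a + 2*int s + 1) \<in> M"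
proof (induction s)
  case 0
  have c: "hh r (a+1) \<in> M \<or> hh (r-1) (a+1) \<in> M \<or> vv r (a+1) \<in> M \<or> vv r (a+1-1) \<in> M"
    using cover[OF pm] by blast
  have "\<not> Vc M r (a + 1)" using nv[rule_format, of 1] 0 by simp
  then have "hh r (a+1) \<notin> M" "hh (r-1) (a+1) \<notin> M" unfolding Vc_def by auto
  moreover have "vv r a \<notin> M" using clash_vc[OF pm a, of r a] by auto
  ultimately show ?case using c by simp
next
  case (Suc s)
  have IH: "vv r (a + 2*int s + 1) \<in> M" using Suc by simp
  have c: "hh r (a + 2*int s + 3) \<in> M \<or> hh (r-1) (a + 2*int s + 3) \<in> M \<or> vv r (a + 2*int s + 3) \<in> M
     \<or> vv r (a + 2*int s + 3 - 1) \<in> M"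
    using cover[OF pm] by blast
  have "\<not> Vc M r (a + int (2*s+3))" using nv[rule_format, of "2*s+3"] Suc.prems by simp
  then have "hh r (a + 2*int s + 3) \<notin> M" "hh (r-1) (a + 2*int s + 3) \<notin> M" unfolding Vc_def by (auto simp: add.assoc)
  moreover have "vv r (a + 2*int s + 2) \<notin> M"
  proof
    assume h: "vv r (a + 2*int s + 2) \<in> M"
    have "pos r (a + 2*int s + 2) \<in> vv r (a + 2*int s + 1)" 
      using mem_simps(5)[of r "a + 2*int s + 1"] by (simp add: add.assoc)
    then have "vv r (a + 2*int s + 2) = vv r (a + 2*int s + 1)"
      using uniq[OF pm h IH, of r "a + 2*int s + 2"] by simp
    then show False by (simp add: vv_eq)
  qed
  ultimately show ?case using c by (simp add: algebra_simps)
qed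

lemma row_even:
  assumes pm: "PM M" and a: "Vc M r a" and b: "Vc M r (a + int t + 1)"
    and nv: "\<forall>k. 1 \<le> k \<and> k \<le> t \<longrightarrow> \<not> Vc M r (a + int k)"
  shows "even t"
proof (rule ccontr)
  assume "odd t"
  then obtain s where s: "t = 2*s+1" by (metis oddE)
  have "vv r (a + 2*int s + 1) \<in> M" using row_vv[OF pm a nv, of s] s by simp
  moreover have "pos r (a + int t + 1) \<in> vv r (a + 2*int s + 1)"
  proof -
    have "a + int t + 1 = (a + 2*int s + 1) + 1" using s by simp
    then show ?thesis using mem_simps(5)[of r "a + 2*int s + 1"] by metis
  qed
  ultimately show False using clash_vc[OF pm b] by blast
qed

definition wit :: "(nat \<times> nat) set set \<Rightarrow> int \<Rightarrow> int \<Rightarrow> nat \<Rightarrow> bool" where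
  "wit M s j g \<longleftrightarrow> hh s j \<in> M \<and> hh s (j + int g + 1) \<in> M \<and> even g \<and> int g + 1 < L \<and>
     (\<forall>k. 1 \<le> k \<and> k \<le> g \<longrightarrow> hh s (j + int k) \<notin> M)"

lemma free:
  assumes pm: "PM M" and w: "wit M s j g"
    and vc: "\<forall>p. Vc M r p \<longleftrightarrow> hh s p \<in> M \<or> hh s' p \<in> M"
    and k: "1 \<le> k" "k \<le> g" "hh s' (j + int k) \<in> M"
  shows "\<exists>j' g'. g' < g \<and> wit M s' j' g'"
proof -
  from w have w1: "hh s j \<in> M" and w2: "hh s (j + int g + 1) \<in> M" and ev: "even g"
    and gL: "int g + 1 < L" and wb: "\<forall>k. 1 \<le> k \<and> k \<le> g \<longrightarrow> hh s (j + int k) \<notin> M"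
    unfolding wit_def by auto
  have "\<exists>k. 1 \<le> k \<and> hh s' (j + int k) \<in> M" using k by blast
  then obtain k1 where k1: "1 \<le> k1" "hh s' (j + int k1) \<in> M"
    and k1min: "\<forall>k'<k1. \<not>(1 \<le> k' \<and> hh s' (j + int k') \<in> M)"
    unfolding exists_least_iff[of "\<lambda>k. 1 \<le> k \<and> hh s' (j + int k) \<in> M"] by blast
  have k1k: "k1 \<le> k" using k1min k by (meson not_less)
  have e1: "even (k1 - 1)"
  proof (rule row_even[OF pm, of r j])
    show "Vc M r j" using vc w1 by blast
    show "Vc M r (j + int (k1 - 1) + 1)" using vc k1 by (simp add: of_nat_diff)
    show "\<forall>k. 1 \<le> k \<and> k \<le> k1 - 1 \<longrightarrow> \<not> Vc M r (j + int k)"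
    proof (intro allI impI)
      fix k' assume kk: "1 \<le> k' \<and> k' \<le> k1 - 1"
      then have "k' < k1" "k' \<le> g" using k1 k1k k by auto
      then have "hh s' (j + int k') \<notin> M" "hh s (j + int k') \<notin> M" using k1min wb kk by auto
      then show "\<not> Vc M r (j + int k')" using vc by blast
    qed
  qed
  have jg: "j + int (g+1) = j + int g + 1" by simp
  have vg: "Vc M r (j + int (g+1))" unfolding jg using vc w2 by blast
  have "\<exists>k. k1 < k \<and> Vc M r (j + int k)"
    using vg k1k k by (intro exI[of _ "g+1"]) simp
  then obtain k2 where k2: "k1 < k2" "Vc M r (j + int k2)"
    and k2min: "\<forall>k'<k2. \<not>(k1 < k' \<and> Vc M r (j + int k'))"
    unfolding exists_least_iff[of "\<lambda>k. k1 < k \<and> Vc M r (j + int k)"] by blast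
  have k2g: "k2 \<le> g + 1"
  proof (rule ccontr)
    assume "\<not> k2 \<le> g + 1"
    then have "g+1 < k2" by simp
    then have "\<not> (k1 < g+1 \<and> Vc M r (j + int (g+1)))" using k2min by blast
    moreover note vg
    ultimately show False using k1k k by simp
  qed
  have e2: "even (k2 - k1 - 1)"
  proof (rule row_even[OF pm, of r "j + int k1"])
    show "Vc M r (j + int k1)" using vc k1 by blast
    show "Vc M r (j + int k1 + int (k2 - k1 - 1) + 1)" using k2 by (simp add: of_nat_diff)
    show "\<forall>k. 1 \<le> k \<and> k \<le> k2 - k1 - 1 \<longrightarrow> \<not> Vc M r (j + int k1 + int k)"
    proof (intro allI impI)
      fix k assume kk: "1 \<le> k \<and> k \<le> k2 - k1 - 1"
      then have "k1 + k < k2" "k1 < k1 + k" by auto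
      then have "\<not> Vc M r (j + int (k1 + k))" using k2min by blast
      then show "\<not> Vc M r (j + int k1 + int k)" by (simp add: add.assoc)
    qed
  qed
  show ?thesis
  proof (cases "k2 = g + 1")
    case True
    then have "even (g - k1)" using e2 by simp
    then have "even k1" using ev k1k k by (simp add: even_diff_nat)
    moreover have "odd k1" using e1 k1(1) by (simp add: even_diff_nat)
    ultimately show ?thesis by simp
  next
    case False
    then have k2g': "k2 \<le> g" using k2g by simp
    have "hh s (j + int k2) \<notin> M" using wb k2g' k2 by simp
    then have h2: "hh s' (j + int k2) \<in> M" using vc k2 by blast
    have "wit M s' (j + int k1) (k2 - k1 - 1)"
      unfolding wit_def
    proof (intro conjI)
      show "hh s' (j + int k1) \<in> M" using k1 by simp
      show "hh s' (j + int k1 + int (k2 - k1 - 1) + 1) \<in> M" using h2 k2 by (simp add: of_nat_diff)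
      show "even (k2 - k1 - 1)" using e2 .
      show "int (k2 - k1 - 1) + 1 < L" using gL k2g' k2 by linarith
      show "\<forall>k. 1 \<le> k \<and> k \<le> k2 - k1 - 1 \<longrightarrow> hh s' (j + int k1 + int k) \<notin> M"
      proof (intro allI impI)
        fix k assume kk: "1 \<le> k \<and> k \<le> k2 - k1 - 1"
        then have "k1 + k < k2" "k1 < k1 + k" by auto
        then have "\<not> Vc M r (j + int (k1 + k))" using k2min by blast
        then show "hh s' (j + int k1 + int k) \<notin> M" using vc by (simp add: add.assoc)
      qed
    qed
    moreover have "k2 - k1 - 1 < g" using k2g' k1(1) k2(1) by linarith
    ultimately show ?thesis by blast
  qed
qed

lemma row_wit:
  assumes pm: "PM M" and nowit: "\<not>(\<exists>s j g. wit M s j g)"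
    and p: "hh (r-1) p \<in> M" and q: "hh r q \<in> M"
  shows False
proof -
  have P0: "P > 0" and L0: "L > 0" using P4 L3 by auto
  define d1 where "d1 = nat ((p - q) mod L)"
  have d1eq: "int d1 = (p - q) mod L" unfolding d1_def using L0 by simp
  have hp: "hh (r-1) (q + int d1) \<in> M"
  proof -
    have "hh (r-1) (q + int d1) = hh (r-1) p"
      unfolding hh_eq d1eq using dvd_mod_diff2[of L "p - q"] by (simp add: algebra_simps)
    then show ?thesis using p by simp
  qed
  have d1pos: "d1 > 0"
  proof (rule ccontr)
    assume "\<not> d1 > 0"
    then have "hh (r-1) q \<in> M" using hp by simp
    moreover have "pos r q \<in> hh (r-1) q" by simp
    ultimately have "hh (r-1) q = hh r q" using uniq[OF pm _ q] by (metis mem_simps(1))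
    then show False by (simp add: hh_eq)
  qed
  have d1L: "int d1 < L" using d1eq L0 by simp
  have claim: "\<And>d. int d \<le> L \<Longrightarrow> Vc M r (q + int d) \<Longrightarrow> (hh r (q + int d) \<in> M \<longleftrightarrow> even d)"
  proof -
    fix d show "int d \<le> L \<Longrightarrow> Vc M r (q + int d) \<Longrightarrow> (hh r (q + int d) \<in> M \<longleftrightarrow> even d)"
    proof (induction d rule: less_induct)
      case (less d)
      show ?case
      proof (cases "d = 0")
        case True then show ?thesis using q by simp
      next
        case False
        define S where "S = {x. x < d \<and> Vc M r (q + int x)}"
        have S0: "0 \<in> S" unfolding S_def Vc_def using q False by simp
        have Sf: "finite S" unfolding S_def by simp
        define x where "x = Max S"
        have xS: "x \<in> S" unfolding x_def using S0 Sf Max_in by blast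
        have xmax: "\<forall>y\<in>S. y \<le> x" unfolding x_def using Sf by simp
        have xd: "x < d" and vx: "Vc M r (q + int x)" using xS unfolding S_def by auto
        define t where "t = d - x - 1"
        have dx: "d = x + t + 1" unfolding t_def using xd by simp
        have nv: "\<forall>k. 1 \<le> k \<and> k \<le> t \<longrightarrow> \<not> Vc M r (q + int x + int k)"
        proof (intro allI impI)
          fix k assume k: "1 \<le> k \<and> k \<le> t"
          show "\<not> Vc M r (q + int x + int k)"
          proof
            assume "Vc M r (q + int x + int k)"
            then have "x + k \<in> S" unfolding S_def using k dx by (simp add: add.assoc)
            then show False using xmax k by fastforce
          qed
        qed
        have vd: "Vc M r (q + int x + int t + 1)" using less.prems dx by (simp add: algebra_simps)
        have evt: "even t" using row_even[OF pm vx vd nv] .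
        have IH: "hh r (q + int x) \<in> M \<longleftrightarrow> even x"
          using less.IH[OF xd] less.prems xd vx by simp
        have tL: "int t + 1 < L"
        proof (cases "int d < L")
          case True then show ?thesis using dx by simp
        next
          case False
          then have "int d = L" using less.prems by simp
          then have "d1 \<in> S" unfolding S_def Vc_def using d1L hp by simp
          then have "d1 \<le> x" using xmax by blast
          then show ?thesis using dx d1pos \<open>int d = L\<close> by simp
        qed
        have nb: "\<forall>k. 1 \<le> k \<and> k \<le> t \<longrightarrow> hh r (q + int x + int k) \<notin> M \<and> hh (r-1) (q + int x + int k) \<notin> M"
          using nv unfolding Vc_def by blast
        have eqd: "q + int d = q + int x + int t + 1" using dx by simp
        have "(hh r (q + int d) \<in> M) \<longleftrightarrow> \<not> (hh r (q + int x) \<in> M)"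
        proof (cases "hh r (q + int x) \<in> M")
          case True
          show ?thesis
          proof (rule ccontr)
            assume "\<not> ?thesis"
            then have "hh r (q + int d) \<in> M" using True by blast
            then have "wit M r (q + int x) t" unfolding wit_def using True evt tL nb eqd by simp
            then show False using nowit by blast
          qed
        next
          case False
          show ?thesis
          proof (rule ccontr)
            assume "\<not> ?thesis"
            then have "hh r (q + int d) \<notin> M" using False by blast
            then have a1: "hh (r-1) (q + int d) \<in> M" using less.prems unfolding Vc_def by blast
            have a2: "hh (r-1) (q + int x) \<in> M" using False vx unfolding Vc_def by blast
            have "wit M (r-1) (q + int x) t" unfolding wit_def using a1 a2 evt tL nb eqd by simp
            then show False using nowit by blast
          qed
        qed
        then show ?thesis using IH dx evt by simp
      qed
    qed
  qed
  have nL: "int (2*n+1) = L" unfolding L_def by simp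
  have "hh r (q + L) = hh r q" by (simp add: hh_eq)
  then have hq: "hh r (q + int (2*n+1)) \<in> M" using q nL by simp
  have "Vc M r (q + int (2*n+1))" using hq unfolding Vc_def by blast
  then have "even (2*n+1)" using claim[of "2*n+1"] hq nL by simp
  then show False by simp
qed

definition Hs :: "(nat \<times> nat) set set" where "Hs = {e. \<exists>a b. e = hh a b}"
definition D :: "(nat \<times> nat) set set \<Rightarrow> nat" where "D M = card (M \<inter> Hs)"

lemma hh_Hs[simp]: "hh a b \<in> Hs" and vv_Hs[simp]: "vv a b \<notin> Hs"
  unfolding Hs_def by auto

lemma tedges_fin: "finite (tedges n m)"
proof -
  have "tedges n m \<subseteq> Pow (tvert n m)"
  proof
    fix e assume "e \<in> tedges n m"
    then consider (h) c d where "e = hh c d" | (v) c d where "e = vv c d" using tedges_cases by blast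
    then show "e \<in> Pow (tvert n m)" by cases (auto simp: hh_def vv_def pos_tvert)
  qed
  moreover have "finite (tvert n m)" unfolding tvert_def by simp
  ultimately show ?thesis by (meson finite_Pow_iff finite_subset)
qed

lemma fin_M: "PM M \<Longrightarrow> finite (M \<inter> Hs)"
  unfolding perfect_matching_def using tedges_fin by (meson finite_Int finite_subset)

lemma Lnd: "0 < x \<Longrightarrow> x < L \<Longrightarrow> \<not> L dvd x \<and> \<not> L dvd (-x)"
  using L_ndvd[of x] by simp

lemma hh_face: "hh c d \<in> face a b \<longleftrightarrow> hh c d = hh a b \<or> hh c d = hh a (b+1)"
  unfolding face_def by auto

lemma hh_same: "hh c x = hh c y \<longleftrightarrow> L dvd (x - y)"
  by (simp add: hh_eq)

lemma reduce: "PM M \<Longrightarrow> wit M s j g \<Longrightarrow> \<exists>M'. (flip n m)\<^sup>*\<^sup>* M M' \<and> PM M' \<and> D M' < D M"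
proof (induction g arbitrary: M s j rule: less_induct)
  case (less g M s j)
  note pm = less.prems(1)
  have "\<exists>g. \<exists>s j. wit M s j g" using less.prems(2) by blast
  then obtain g0 where ex0: "\<exists>s j. wit M s j g0" and min0: "\<forall>g'<g0. \<not>(\<exists>s j. wit M s j g')"
    unfolding exists_least_iff[of "\<lambda>g. \<exists>s j. wit M s j g"] by blast
  then obtain s0 j0 where w0: "wit M s0 j0 g0" by blast
  have g0g: "g0 \<le> g" using min0 less.prems(2) by (meson not_less)
  from w0 have w1: "hh s0 j0 \<in> M" and w2: "hh s0 (j0 + int g0 + 1) \<in> M" and ev: "even g0"
    and gL: "int g0 + 1 < L" and wb: "\<forall>k. 1 \<le> k \<and> k \<le> g0 \<longrightarrow> hh s0 (j0 + int k) \<notin> M"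
    unfolding wit_def by auto
  have vA: "vv (s0+1) j0 \<notin> M" using clash_hv[OF pm w1, of "s0+1" j0 "s0+1" j0] by auto
  have vB: "vv s0 j0 \<notin> M" using clash_hv[OF pm w1, of s0 j0 s0 j0] by auto
  have finM: "finite (M \<inter> Hs)" using fin_M[OF pm] .
  show ?case
  proof (cases "g0 = 0")
    case True
    have al: "alt M s0 j0" unfolding alt_def using w1 w2 vA vB True by simp
    define M' where "M' = fl M s0 j0"
    have "M' \<inter> Hs \<subseteq> M \<inter> Hs - {hh s0 j0}"
    proof
      fix e assume e: "e \<in> M' \<inter> Hs"
      then obtain c d where ecd: "e = hh c d" unfolding Hs_def by blast
      have "e \<in> M" 
      proof (rule ccontr)
        assume "e \<notin> M"
        then have "e \<in> face s0 j0" using e by (auto simp: M'_def fl_def)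
        then have "e = hh s0 j0 \<or> e = hh s0 (j0+1)" using ecd hh_face by blast
        then show False using \<open>e \<notin> M\<close> w1 w2 True by auto
      qed
      then have "e \<notin> face s0 j0" using e by (auto simp: M'_def fl_def)
      then show "e \<in> M \<inter> Hs - {hh s0 j0}" using \<open>e \<in> M\<close> e unfolding face_def by auto
    qed
    then have "M' \<inter> Hs \<subset> M \<inter> Hs" using w1 by auto
    then have "D M' < D M" unfolding D_def using finM psubset_card_mono by blast
    moreover have "(flip n m)\<^sup>*\<^sup>* M M'" unfolding M'_def using flip_fl[OF al] by blast
    moreover have "PM M'" unfolding M'_def using pm_fl[OF pm al] .
    ultimately show ?thesis by blast
  next
    case False
    then have g2: "2 \<le> g0" using ev by (metis One_nat_def dvd_1_iff_1 less_2_cases not_less numeral_2_eq_2 odd_one)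
    have free1: "hh (s0-1) (j0+1) \<notin> M"
    proof
      assume h: "hh (s0-1) (j0+1) \<in> M"
      have "\<exists>j' g'. g' < g0 \<and> wit M (s0-1) j' g'"
        by (rule free[OF pm w0, of s0 "s0-1" 1]) (use h g2 in \<open>auto simp: Vc_def\<close>)
      then show False using min0 by blast
    qed
    have free2: "hh (s0+1) (j0+1) \<notin> M"
    proof
      assume h: "hh (s0+1) (j0+1) \<in> M"
      have "\<exists>j' g'. g' < g0 \<and> wit M (s0+1) j' g'"
        by (rule free[OF pm w0, of "s0+1" "s0+1" 1]) (use h g2 in \<open>auto simp: Vc_def\<close>)
      then show False using min0 by blast
    qed
    have nh1: "hh s0 (j0+1) \<notin> M" using wb[rule_format, of 1] g2 by simp
    have nh2: "hh s0 (j0+2) \<notin> M" using wb[rule_format, of 2] g2 by simp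
    have v1: "vv s0 (j0+1) \<in> M"
    proof -
      have "hh s0 (j0+1) \<in> M \<or> hh (s0-1) (j0+1) \<in> M \<or> vv s0 (j0+1) \<in> M \<or> vv s0 (j0+1-1) \<in> M"
        using cover[OF pm] by blast
      then show ?thesis using nh1 free1 vB by simp
    qed
    have v2: "vv (s0+1) (j0+1) \<in> M"
    proof -
      have "hh (s0+1) (j0+1) \<in> M \<or> hh (s0+1-1) (j0+1) \<in> M \<or> vv (s0+1) (j0+1) \<in> M \<or> vv (s0+1) (j0+1-1) \<in> M"
        using cover[OF pm] by blast
      then show ?thesis using nh1 free2 vA by simp
    qed
    have al1: "alt M s0 (j0+1)" unfolding alt_def using nh1 nh2 v1 v2 by (simp add: add.assoc)
    define M1 where "M1 = fl M s0 (j0+1)"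
    have pm1: "PM M1" unfolding M1_def using pm_fl[OF pm al1] .
    have f1: "flip n m M M1" unfolding M1_def using flip_fl[OF al1] .
    have F1: "face s0 (j0+1) = {hh s0 (j0+1), vv (s0+1) (j0+1), hh s0 (j0+2), vv s0 (j0+1)}"
      unfolding face_def by (simp add: add.assoc)
    have m1a: "hh s0 j0 \<in> M1" unfolding M1_def fl_mem F1 using w1 by (simp add: hh_same)
    have m1b: "hh s0 (j0+1) \<in> M1" unfolding M1_def fl_mem F1 using nh1 by simp
    have m1c: "vv (s0+1) j0 \<notin> M1" unfolding M1_def fl_mem F1 using vA by (simp add: vv_eq)
    have m1d: "vv s0 j0 \<notin> M1" unfolding M1_def fl_mem F1 using vB by (simp add: vv_eq)
    have al2: "alt M1 s0 j0" unfolding alt_def using m1a m1b m1c m1d by simp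
    define M2 where "M2 = fl M1 s0 j0"
    have pm2: "PM M2" unfolding M2_def using pm_fl[OF pm1 al2] .
    have f2: "flip n m M1 M2" unfolding M2_def using flip_fl[OF al2] .
    have F2: "face s0 j0 = {hh s0 j0, vv (s0+1) j0, hh s0 (j0+1), vv s0 j0}"
      unfolding face_def by simp
    have mem2: "\<And>x. hh s0 x \<in> M2 \<longleftrightarrow> ((hh s0 x \<in> M \<longleftrightarrow> \<not> (L dvd (x - (j0+1)) \<or> L dvd (x - (j0+2))))
                 \<longleftrightarrow> \<not> (L dvd (x - j0) \<or> L dvd (x - (j0+1))))"
      unfolding M2_def M1_def fl_mem F1 F2 by (simp add: hh_same)
    have gL': "int g0 < L" using gL by simp
    have w2': "wit M2 s0 (j0+2) (g0-2)" unfolding wit_def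
    proof (intro conjI)
      show "hh s0 (j0 + 2) \<in> M2" unfolding mem2 using nh2 by simp
      have "j0 + 2 + int (g0 - 2) + 1 = j0 + int g0 + 1" using g2 by (simp add: of_nat_diff)
      moreover have "hh s0 (j0 + int g0 + 1) \<in> M2" unfolding mem2 using w2 g2 gL
        Lnd[of "int g0"] Lnd[of "int g0 - 1"] Lnd[of "int g0 + 1"] by (simp add: algebra_simps)
      ultimately show "hh s0 (j0 + 2 + int (g0 - 2) + 1) \<in> M2" by simp
      show "even (g0 - 2)" using ev g2 by simp
      show "int (g0 - 2) + 1 < L" using gL g2 by simp
      show "\<forall>k. 1 \<le> k \<and> k \<le> g0 - 2 \<longrightarrow> hh s0 (j0 + 2 + int k) \<notin> M2"
      proof (intro allI impI)
        fix k assume k: "1 \<le> k \<and> k \<le> g0 - 2"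
        have "hh s0 (j0 + int (k+2)) \<notin> M" using wb[rule_format, of "k+2"] k by linarith
        then have nm: "hh s0 (j0 + 2 + int k) \<notin> M" by (simp add: algebra_simps)
        have kb: "int k + 2 < L" using k g2 gL by linarith
        show "hh s0 (j0 + 2 + int k) \<notin> M2" unfolding mem2 using nm k kb
          Lnd[of "int k"] Lnd[of "int k + 1"] Lnd[of "int k + 2"] by (simp add: algebra_simps)
      qed
    qed
    have sub: "M2 \<inter> Hs \<subseteq> insert (hh s0 (j0+2)) (M \<inter> Hs - {hh s0 j0})"
    proof
      fix e assume e: "e \<in> M2 \<inter> Hs"
      then obtain c d where ecd: "e = hh c d" unfolding Hs_def by blast
      have nf2: "e \<notin> face s0 j0"
      proof
        assume "e \<in> face s0 j0"
        then have "e = hh s0 j0 \<or> e = hh s0 (j0+1)" using ecd hh_face by blast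
        then show False using e m1a m1b by (auto simp: M2_def fl_mem face_def)
      qed
      then have eM1: "e \<in> M1" using e by (auto simp: M2_def fl_mem)
      have ne: "e \<noteq> hh s0 j0" using nf2 unfolding face_def by auto
      show "e \<in> insert (hh s0 (j0+2)) (M \<inter> Hs - {hh s0 j0})"
      proof (cases "e \<in> face s0 (j0+1)")
        case True
        then have "e = hh s0 (j0+1) \<or> e = hh s0 (j0+1+1)" using ecd hh_face by blast
        moreover have "e \<noteq> hh s0 (j0+1)" using nf2 unfolding face_def by auto
        ultimately show ?thesis by (simp add: add.assoc)
      next
        case False
        then have "e \<in> M" using eM1 by (auto simp: M1_def fl_mem)
        then show ?thesis using ne e by blast
      qed
    qed
    have "D M2 \<le> D M"
    proof -
      have "card (M2 \<inter> Hs) \<le> card (insert (hh s0 (j0+2)) (M \<inter> Hs - {hh s0 j0}))"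
        using sub finM by (intro card_mono) auto
      also have "\<dots> \<le> Suc (card (M \<inter> Hs - {hh s0 j0}))" using finM by (simp add: card_insert_if)
      also have "\<dots> = card (M \<inter> Hs)" using finM w1 card_Diff_singleton card_gt_0_iff
        by (metis IntI Suc_pred' empty_iff hh_Hs)
      finally show ?thesis unfolding D_def .
    qed
    moreover have "g0 - 2 < g" using g0g g2 by simp
    then obtain M' where M': "(flip n m)\<^sup>*\<^sup>* M2 M'" "PM M'" "D M' < D M2"
      using less.IH[of "g0-2" M2 s0 "j0+2"] pm2 w2' by blast
    moreover have "(flip n m)\<^sup>*\<^sup>* M M2" using f1 f2 by (meson rtranclp.simps r_into_rtranclp rtranclp_trans)
    ultimately show ?thesis by (meson order_less_le_trans rtranclp_trans)
  qed
qed


lemma Eset_hh: "Eset n m i = {hh (int i) (int j) | j. 1 \<le> j \<and> j \<le> 2*n+1}"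
  unfolding Eset_def hedge_hh by simp

lemma final: "PM M \<Longrightarrow> \<exists>M'. (flip n m)\<^sup>*\<^sup>* M M' \<and> PM M' \<and> (\<exists>i. 1 \<le> i \<and> i \<le> 2*m \<and> M' \<inter> Eset n m i = {})"
proof (induction "D M" arbitrary: M rule: less_induct)
  case (less M)
  show ?case
  proof (cases "\<exists>s j g. wit M s j g")
    case True
    then obtain s j g where "wit M s j g" by blast
    then obtain M1 where M1: "(flip n m)\<^sup>*\<^sup>* M M1" "PM M1" "D M1 < D M" using reduce less.prems by blast
    then obtain M' where "(flip n m)\<^sup>*\<^sup>* M1 M'" "PM M'" "\<exists>i. 1 \<le> i \<and> i \<le> 2*m \<and> M' \<inter> Eset n m i = {}"
      using less.hyps by blast
    then show ?thesis using M1(1) rtranclp_trans[of "flip n m" M M1 M'] by blast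
  next
    case False
    have "\<not>((\<exists>p. hh (1-1) p \<in> M) \<and> (\<exists>q. hh 1 q \<in> M))" using row_wit[OF less.prems False] by blast
    then have "(\<forall>p. hh 0 p \<notin> M) \<or> (\<forall>q. hh 1 q \<notin> M)" by simp
    then show ?thesis
    proof
      assume h: "\<forall>p. hh 0 p \<notin> M"
      have "\<And>j. hh (int (2*m)) j = hh 0 j" by (simp add: hh_eq P_def)
      then have "M \<inter> Eset n m (2*m) = {}" unfolding Eset_hh using h by auto
      moreover have "1 \<le> 2*m" using m2 by simp
      ultimately show ?thesis using less.prems by blast
    next
      assume h: "\<forall>q. hh 1 q \<notin> M"
      have "M \<inter> Eset n m 1 = {}" unfolding Eset_hh using h by auto
      moreover have "1 \<le> 2*m" using m2 by simp
      ultimately show ?thesis using less.prems by blast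
    qed
  qed
qed

end

theorem lemma4p2:
  fixes n m :: nat and M :: "(nat \<times> nat) set set"
  assumes "n \<ge> 1" and "m \<ge> 2" and "perfect_matching n m M"
  shows "\<exists>M'. (flip n m)\<^sup>*\<^sup>* M M' \<and> perfect_matching n m M' \<and>
           (\<exists>i. 1 \<le> i \<and> i \<le> 2*m \<and> M' \<inter> Eset n m i = {})"
proof -
  interpret torus n m using assms(1,2) by unfold_locales
  show ?thesis using final[OF assms(3)] .
qed

end
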